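(* Let $f\in\mathcal C$. Then for every integer $d\ge1$: (i) $D_f(d)=f(1)+\sum_{\ell\in\mathbb Z}c_f(\ell)\,\varepsilon_\ell(d)$; (ii) if the series $\sum_{\ell\in\mathbb Z}c_f(\ell)$ converges, then $D_f(d)=f(1)+d\sum_{\ell\in\mathbb Z,\ d\mid\ell}c_f(\ell)-\sum_{\ell\in\mathbb Z}c_f(\ell)$.
   Context: $D_f(d)=\sum_{k=1}^d f(k/d)$. For $d\ge1$, $\ell\in\mathbb Z$: $\varepsilon_\ell(d)=d-1$ if $d\mid\ell$ and $-1$ otherwise (every $d$ divides $0$). $\mathcal C$ is the class of functions $g\colon[0,1]\to\mathbb R$ such that for every rational $x\in(0,1)$, $g(x-0)=g(x+0)$ and $\int_0^\delta\frac{|g(x+u)+g(x-u)-2g(x)|}{u}du<\infty$ for some $\delta>0$. Functions are regarded as $1$-periodic and tacitly Lebesgue integrable on $[0,1]$, with Fourier coefficients $c_g(\ell)=\int_0^1g(x)e^{-2\pi i\ell x}dx$. Series over $\mathbb Z$ are limits of symmetric partial sums $\sum_{|\ell|\le N}$; for negative $\ell$, $d\mid\ell$ means $d\mid|\ell|$. *)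

theory Defs
  imports "HOL-Analysis.Analysis"
begin

definition Dsum :: "(real \<Rightarrow> real) \<Rightarrow> nat \<Rightarrow> real" where
  "Dsum f d = (\<Sum>k=1..d. f (real k / real d))"

definition eps :: "int \<Rightarrow> nat \<Rightarrow> real" where
  "eps l d = (if int d dvd l then real d - 1 else -1)"

text \<open>1-periodic extension of a function given on [0,1] (uses values on [0,1)).\<close>
definition per :: "(real \<Rightarrow> real) \<Rightarrow> real \<Rightarrow> real" where
  "per g x = g (frac x)"

definition fourier_coeff :: "(real \<Rightarrow> real) \<Rightarrow> int \<Rightarrow> complex" where
  "fourier_coeff g l =
     integral {0..1} (\<lambda>x. complex_of_real (g x) * exp (- (2 * of_real pi * \<i> * of_int l * of_real x)))"

definition classC :: "(real \<Rightarrow> real) \<Rightarrow> bool" where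
  "classC g \<longleftrightarrow>
     (\<forall>x\<in>\<rat>. 0 < x \<and> x < 1 \<longrightarrow>
        (\<exists>L. (per g \<longlongrightarrow> L) (at_left x) \<and> (per g \<longlongrightarrow> L) (at_right x)) \<and>
        (\<exists>\<delta>>0. (\<lambda>u. \<bar>per g (x + u) + per g (x - u) - 2 * per g x\<bar> / u)
                  absolutely_integrable_on {0..\<delta>}))"

end

theory Submission
  imports Defs
begin


definition DN :: "nat \<Rightarrow> real \<Rightarrow> real" where
  "DN N u = 1 + 2 * (\<Sum>l=1..N. cos (2 * pi * real l * u))"

lemma DN_even: "DN N (-u) = DN N u"
  by (simp add: DN_def)

lemma DN_cont: "continuous_on S (DN N)"
  unfolding DN_def by (intro continuous_intros)

lemma DN_sin: "sin (pi * u) * DN N u = sin ((2 * real N + 1) * pi * u)"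
proof (induction N)
  case 0 then show ?case by (simp add: DN_def)
next
  case (Suc N)
  have "DN (Suc N) u = DN N u + 2 * cos (2 * pi * real (Suc N) * u)"
    by (simp add: DN_def)
  then have "sin (pi * u) * DN (Suc N) u = sin ((2 * real N + 1) * pi * u) + 2 * sin (pi * u) * cos (2 * pi * real (Suc N) * u)"
    using Suc by (simp add: algebra_simps)
  also have "2 * sin (pi * u) * cos (2 * pi * real (Suc N) * u) = sin (pi*u + 2 * pi * real (Suc N) * u) + sin (pi*u - 2 * pi * real (Suc N) * u)"
    by (simp add: sin_add sin_diff)
  also have "sin (pi*u + 2 * pi * real (Suc N) * u) = sin ((2 * real (Suc N) + 1) * pi * u)"
    by (simp add: algebra_simps)
  also have "pi*u - 2 * pi * real (Suc N) * u = - ((2 * real N + 1) * pi * u)"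
    by (simp add: algebra_simps)
  finally show ?case by simp
qed

lemma DN_closed: "sin (pi * u) \<noteq> 0 \<Longrightarrow> DN N u = sin ((2 * real N + 1) * pi * u) / sin (pi * u)"
  using DN_sin[of u N] by (simp add: field_simps)

lemma cos_has_integral:
  fixes a b c e :: real
  assumes "c \<noteq> 0" "a \<le> b"
  shows "((\<lambda>t. cos (c * t + e)) has_integral (sin (c * b + e) - sin (c * a + e)) / c) {a..b}"
proof -
  have d: "((\<lambda>t. sin (c * t + e) / c) has_vector_derivative cos (c * t + e)) (at t within {a..b})" for t
  proof -
    have "((\<lambda>t. sin (c * t + e) / c) has_real_derivative (cos (c * t + e) * c / c)) (at t within {a..b})"
      by (auto intro!: derivative_eq_intros)
    then show ?thesis
      using assms(1) by (simp add: has_real_derivative_iff_has_vector_derivative)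
  qed
  have "((\<lambda>t. cos (c * t + e)) has_integral (sin (c * b + e) / c - sin (c * a + e) / c)) {a..b}"
    using fundamental_theorem_of_calculus[OF assms(2) d] by simp
  then show ?thesis by (simp add: diff_divide_distrib)
qed

lemma DN_integral: "integral {0..1} (\<lambda>t. DN N (t - x)) = 1"
proof -
  have c0: "((\<lambda>t. cos (2 * pi * real l * (t - x))) has_integral 0) {0..1}" if "l \<in> {1..N}" for l
  proof -
    have "((\<lambda>t. cos ((2 * pi * real l) * t + (- 2 * pi * real l * x))) has_integral
        (sin ((2 * pi * real l) * 1 + (- 2 * pi * real l * x)) - sin ((2 * pi * real l) * 0 + (- 2 * pi * real l * x))) / (2 * pi * real l)) {0..1}"
      using that by (intro cos_has_integral) auto
    moreover have "sin ((2 * pi * real l) * 1 + (- 2 * pi * real l * x)) = sin ((2 * pi * real l) * 0 + (- 2 * pi * real l * x))"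
    proof -
      have "sin ((2 * pi * real l) * 1 + (- 2 * pi * real l * x)) = sin (2 * real l * pi - 2 * pi * real l * x)"
        by (simp add: algebra_simps)
      also have "\<dots> = sin (- 2 * pi * real l * x)"
        by (simp only: sin_diff sin_2npi cos_2npi) simp
      finally show ?thesis by simp
    qed
    ultimately show ?thesis by (simp add: algebra_simps)
  qed
  have "((\<lambda>t. DN N (t - x)) has_integral (1 + 2 * (\<Sum>l=1..N. 0))) {0..1}"
    unfolding DN_def
    by (intro has_integral_add has_integral_mult_right has_integral_sum c0) (auto intro: has_integral_const_real[of 1 0 1, simplified])
  then show ?thesis by (simp add: integral_unique)
qed

lemma sin_ge_x_cos: assumes "0 \<le> y" "y \<le> pi" shows "y * cos y \<le> sin y"
proof -
  let ?g = "\<lambda>y. sin y - y * cos y"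
  have "?g 0 \<le> ?g y"
  proof (rule DERIV_nonneg_imp_nondecreasing[OF assms(1)])
    fix u assume u: "0 \<le> u" "u \<le> y"
    have "(?g has_real_derivative (cos u - (cos u - u * sin u))) (at u)"
      by (auto intro!: derivative_eq_intros)
    moreover have "0 \<le> cos u - (cos u - u * sin u)"
      using u assms sin_ge_zero[of u] by simp
    ultimately show "\<exists>y. (?g has_real_derivative y) (at u) \<and> 0 \<le> y" by blast
  qed
  then show ?thesis by simp
qed

lemma sin_pi_ge: assumes "0 \<le> u" "u \<le> 1/3" shows "u \<le> sin (pi * u)"
proof -
  have "pi * u * cos (pi * u) \<le> sin (pi * u)"
    using assms by (intro sin_ge_x_cos) auto
  moreover have "cos (pi/3) \<le> cos (pi * u)"
    using assms by (intro cos_monotone_0_pi_le) auto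
  then have "1/2 \<le> cos (pi * u)" by (simp add: cos_60)
  then have "pi * u * (1/2) \<le> pi * u * cos (pi * u)"
    using assms by (intro mult_left_mono) auto
  moreover have "2 * u \<le> pi * u" using pi_gt3 assms(1) by (intro mult_right_mono) auto
  then have "u \<le> pi * u * (1/2)" by simp
  ultimately show ?thesis by linarith
qed



lemma sin_orth:
  assumes "1 \<le> j" "1 \<le> k"
  shows "((\<lambda>u. sin (real j * pi * u) * sin (real k * pi * u)) has_integral (if j = k then 1/2 else 0)) {0..1}"
proof -
  have eq: "sin (real j * pi * u) * sin (real k * pi * u) =
      (cos ((real j - real k) * pi * u) - cos ((real j + real k) * pi * u)) / 2" for u
    by (simp add: sin_times_sin algebra_simps)
  have I2: "((\<lambda>u. cos ((real j + real k) * pi * u)) has_integral 0) {0..1}"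
  proof -
    have "((\<lambda>u. cos (((real j + real k) * pi) * u + 0)) has_integral
        (sin (((real j + real k) * pi) * 1 + 0) - sin (((real j + real k) * pi) * 0 + 0)) / ((real j + real k) * pi)) {0..1}"
      using assms by (intro cos_has_integral) auto
    moreover have "sin (((real j + real k) * pi) * 1 + 0) = 0"
      using sin_npi[of "j + k"] by simp
    ultimately show ?thesis by (simp add: mult.assoc)
  qed
  have I1: "((\<lambda>u. cos ((real j - real k) * pi * u)) has_integral (if j = k then 1 else 0)) {0..1}"
  proof (cases "j = k")
    case True
    then show ?thesis using has_integral_const_real[of 1 0 1] by simp
  next
    case False
    have "((\<lambda>u. cos (((real j - real k) * pi) * u + 0)) has_integral
        (sin (((real j - real k) * pi) * 1 + 0) - sin (((real j - real k) * pi) * 0 + 0)) / ((real j - real k) * pi)) {0..1}"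
      using False by (intro cos_has_integral) auto
    moreover have "sin (((real j - real k) * pi) * 1 + 0) = 0"
    proof -
      have "(real j - real k) * pi * 1 + 0 = pi * of_int (int j - int k)" by simp
      then show ?thesis by (simp only: sin_npi_int)
    qed
    ultimately show ?thesis using False by (simp add: mult.assoc)
  qed
  have "((\<lambda>u. (cos ((real j - real k) * pi * u) - cos ((real j + real k) * pi * u)) / 2) has_integral
      ((if j = k then 1 else 0) - 0) / 2) {0..1}"
    by (intro has_integral_divide has_integral_diff I1 I2)
  then show ?thesis
    by (simp only: eq[symmetric]) (cases "j = k"; simp)
qed

lemma bessel_RL:
  fixes g :: "real \<Rightarrow> real"
  assumes gm: "g \<in> borel_measurable (lebesgue_on {0..1})" and gb: "\<And>u. u \<in> {0..1} \<Longrightarrow> \<bar>g u\<bar> \<le> B"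
  shows "(\<lambda>k. integral {0..1} (\<lambda>u. g u * sin (real k * pi * u))) \<longlonglongrightarrow> 0"
proof -
  define s where "s k u = sin (real k * pi * u)" for k u
  define b where "b k = integral {0..1} (\<lambda>u. g u * s k u)" for k
  have gi: "g absolutely_integrable_on {0..1}"
    by (rule measurable_bounded_by_integrable_imp_absolutely_integrable[OF gm, where g = "\<lambda>_. B"]) (use gb in auto)
  have gsi: "(\<lambda>u. g u * s k u) integrable_on {0..1}" for k
  proof -
    have "(\<lambda>u. s k u * g u) absolutely_integrable_on {0..1}"
    proof (rule absolutely_integrable_bounded_measurable_product_real[OF _ _ _ gi])
      show "s k \<in> borel_measurable (lebesgue_on {0..1})"
        unfolding s_def by (intro continuous_imp_measurable_on_sets_lebesgue continuous_intros) auto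
      show "bounded (s k ` {0..1})"
        unfolding s_def bounded_iff by (intro exI[of _ 1]) auto
    qed auto
    then show ?thesis by (simp add: absolutely_integrable_on_def mult.commute)
  qed
  have ggi: "(\<lambda>u. g u * g u) integrable_on {0..1}"
  proof -
    have "(\<lambda>u. g u * g u) absolutely_integrable_on {0..1}"
    proof (rule absolutely_integrable_bounded_measurable_product_real[OF gm _ _ gi])
      show "bounded (g ` {0..1})"
        unfolding bounded_iff using gb by (intro exI[of _ B]) auto
    qed auto
    then show ?thesis by (simp add: absolutely_integrable_on_def)
  qed
  have ggB: "integral {0..1} (\<lambda>u. g u * g u) \<le> B * B"
  proof -
    have "integral {0..1} (\<lambda>u. g u * g u) \<le> integral {0..1} (\<lambda>u::real. B * B)"
    proof (rule Henstock_Kurzweil_Integration.integral_le)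
      show "(\<lambda>u. g u * g u) integrable_on {0..1}" by (rule ggi)
      show "(\<lambda>u::real. B * B) integrable_on {0..1::real}" by (rule integrable_const_ivl)
      fix u assume "u \<in> {0..1::real}"
      then have gu: "\<bar>g u\<bar> \<le> B" using gb by auto
      then have "0 \<le> B" using abs_ge_zero order_trans by blast
      then have "\<bar>g u\<bar> * \<bar>g u\<bar> \<le> B * B" using gu by (intro mult_mono) auto
      then show "g u * g u \<le> B * B" by (simp add: abs_mult[symmetric])
    qed
    then show ?thesis by simp
  qed
  have part: "(\<Sum>k\<in>{1..<n}. (b k)\<^sup>2) \<le> B * B / 2" for n
  proof -
    define K where "K = {1..<n}"
    have fK: "finite K" by (simp add: K_def)
    define P where "P u = (\<Sum>k\<in>K. b k * s k u)" for u
    define F where "F u = g u * g u - 4 * (\<Sum>k\<in>K. b k * (g u * s k u)) + 4 * (\<Sum>j\<in>K. \<Sum>k\<in>K. b j * b k * (s j u * s k u))" for u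
    have Fsq: "F u = (g u - 2 * P u)\<^sup>2" for u
    proof -
      have 1: "P u * P u = (\<Sum>j\<in>K. \<Sum>k\<in>K. b j * b k * (s j u * s k u))"
        unfolding P_def by (simp add: sum_product algebra_simps)
      have 2: "g u * P u = (\<Sum>k\<in>K. b k * (g u * s k u))"
        unfolding P_def by (simp add: sum_distrib_left algebra_simps)
      have "(g u - 2 * P u)\<^sup>2 = g u * g u - 4 * (g u * P u) + 4 * (P u * P u)"
        by (simp add: power2_eq_square algebra_simps)
      then show ?thesis unfolding F_def 1 2 by simp
    qed
    have Fint: "(F has_integral (integral {0..1} (\<lambda>u. g u * g u) - 4 * (\<Sum>k\<in>K. b k * b k)
        + 4 * (\<Sum>j\<in>K. \<Sum>k\<in>K. b j * b k * (if j = k then 1/2 else 0)))) {0..1}"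
      unfolding F_def
    proof (intro has_integral_add has_integral_diff has_integral_mult_right has_integral_sum fK)
      show "((\<lambda>u. g u * g u) has_integral integral {0..1} (\<lambda>u. g u * g u)) {0..1}"
        using ggi by (rule integrable_integral)
      show "((\<lambda>u. g u * s k u) has_integral b k) {0..1}" for k
        unfolding b_def using gsi by (rule integrable_integral)
      show "((\<lambda>u. s j u * s k u) has_integral (if j = k then 1 / 2 else 0)) {0..1}" if "j \<in> K" "k \<in> K" for j k
        unfolding s_def using that by (intro sin_orth) (auto simp: K_def)
    qed
    have "0 \<le> integral {0..1} (\<lambda>u. g u * g u) - 4 * (\<Sum>k\<in>K. b k * b k)
        + 4 * (\<Sum>j\<in>K. \<Sum>k\<in>K. b j * b k * (if j = k then 1/2 else 0))"
      by (rule has_integral_nonneg[OF Fint]) (simp add: Fsq)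
    moreover have "(\<Sum>j\<in>K. \<Sum>k\<in>K. b j * b k * (if j = k then 1/2 else 0)) = (\<Sum>j\<in>K. b j * b j / 2)"
    proof (rule sum.cong[OF refl])
      fix j assume "j \<in> K"
      have "(\<Sum>k\<in>K. b j * b k * (if j = k then 1/2 else 0)) = (\<Sum>k\<in>K. if k = j then b j * b j / 2 else 0)"
        by (rule sum.cong) auto
      also have "\<dots> = b j * b j / 2" using \<open>j \<in> K\<close> fK by simp
      finally show "(\<Sum>k\<in>K. b j * b k * (if j = k then 1/2 else 0)) = b j * b j / 2" .
    qed
    ultimately have "0 \<le> integral {0..1} (\<lambda>u. g u * g u) - 2 * (\<Sum>k\<in>K. b k * b k)"
      by (simp add: sum_divide_distrib[symmetric])
    then show ?thesis using ggB unfolding K_def by (simp add: power2_eq_square)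
  qed
  have b0: "b 0 = 0" by (simp add: b_def s_def)
  have "summable (\<lambda>k. (b k)\<^sup>2)"
  proof (rule summableI_nonneg_bounded)
    fix n
    have "(\<Sum>k<n. (b k)\<^sup>2) = (\<Sum>k\<in>{1..<n}. (b k)\<^sup>2)"
      by (rule sum.mono_neutral_right) (auto simp: b0 not_less_eq_eq)
    then show "(\<Sum>k<n. (b k)\<^sup>2) \<le> B * B / 2" using part by simp
  qed simp
  then have "(\<lambda>k. (b k)\<^sup>2) \<longlonglongrightarrow> 0" by (rule summable_LIMSEQ_zero)
  then have "(\<lambda>k. sqrt ((b k)\<^sup>2)) \<longlonglongrightarrow> sqrt 0" by (rule tendsto_real_sqrt)
  then have "(\<lambda>k. \<bar>b k\<bar>) \<longlonglongrightarrow> 0" by simp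
  then have "b \<longlonglongrightarrow> 0" by (rule tendsto_rabs_zero_cancel)
  then show ?thesis unfolding b_def s_def .
qed



lemma abs_int_mult_cont:
  fixes h w :: "real \<Rightarrow> real"
  assumes h: "h absolutely_integrable_on S" and S: "S \<in> sets lebesgue"
    and w: "continuous_on S w" and wb: "bounded (w ` S)"
  shows "(\<lambda>u. h u * w u) absolutely_integrable_on S"
proof -
  have "(\<lambda>u. w u * h u) absolutely_integrable_on S"
    by (rule absolutely_integrable_bounded_measurable_product_real[OF _ S wb h])
       (rule continuous_imp_measurable_on_sets_lebesgue[OF w S])
  then show ?thesis by (simp add: mult.commute)
qed

lemma abs_int_mult_sin:
  fixes h :: "real \<Rightarrow> real"
  assumes h: "h absolutely_integrable_on {a..b}"
  shows "(\<lambda>u. h u * sin (c * u)) absolutely_integrable_on {a..b}"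
  by (rule abs_int_mult_cont[OF h]) (auto intro!: continuous_intros simp: bounded_iff intro: exI[of _ 1])

lemma abs_int_imp_int: "(f::'a::euclidean_space \<Rightarrow> 'b::euclidean_space) absolutely_integrable_on S \<Longrightarrow> f integrable_on S"
  by (simp add: absolutely_integrable_on_def)

lemma RL0:
  fixes \<phi> :: "real \<Rightarrow> real"
  assumes \<phi>: "\<phi> absolutely_integrable_on {0..1}"
  shows "(\<lambda>k. integral {0..1} (\<lambda>u. \<phi> u * sin (real k * pi * u))) \<longlonglongrightarrow> 0"
proof -
  have \<phi>m: "\<phi> \<in> borel_measurable (lebesgue_on {0..1})"
    using \<phi> by (simp add: absolutely_integrable_measurable_real)
  have \<phi>a: "(\<lambda>u. \<bar>\<phi> u\<bar>) integrable_on {0..1}"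
    using \<phi> by (simp add: absolutely_integrable_on_def)
  define T where "T n u = max (- real n) (min (real n) (\<phi> u))" for n u
  have Tm: "T n \<in> borel_measurable (lebesgue_on {0..1})" for n
    unfolding T_def using \<phi>m by measurable
  have Tb: "\<bar>T n u\<bar> \<le> real n" for n u by (auto simp: T_def)
  have Tphi: "\<bar>T n u\<bar> \<le> \<bar>\<phi> u\<bar>" for n u by (auto simp: T_def)
  have Ti: "T n absolutely_integrable_on {0..1}" for n
    by (rule measurable_bounded_by_integrable_imp_absolutely_integrable[OF Tm _ \<phi>a]) (auto simp: Tphi)
  have Dabs: "(\<lambda>u. \<phi> u - T n u) absolutely_integrable_on {0..1}" for n
    using set_integral_diff(1)[OF \<phi> Ti] .
  have Di: "(\<lambda>u. \<bar>\<phi> u - T n u\<bar>) integrable_on {0..1}" for n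
    using Dabs[of n] by (simp add: absolutely_integrable_on_def)
  have conv: "(\<lambda>n. integral {0..1} (\<lambda>u. \<bar>\<phi> u - T n u\<bar>)) \<longlonglongrightarrow> integral {0..1} (\<lambda>u::real. 0::real)"
  proof (rule dominated_convergence(2)[of "\<lambda>n u. \<bar>\<phi> u - T n u\<bar>" "{0..1}" "\<lambda>u. \<bar>\<phi> u\<bar>" "\<lambda>u. 0"])
    show "(\<lambda>u. \<bar>\<phi> u - T n u\<bar>) integrable_on {0..1}" for n by (rule Di)
    show "(\<lambda>u. \<bar>\<phi> u\<bar>) integrable_on {0..1}" by (rule \<phi>a)
    show "norm \<bar>\<phi> u - T n u\<bar> \<le> \<bar>\<phi> u\<bar>" for n u
      by (auto simp: T_def max_def min_def)
    show "(\<lambda>n. \<bar>\<phi> u - T n u\<bar>) \<longlonglongrightarrow> 0" for u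
    proof (rule tendsto_eventually)
      obtain N where N: "\<bar>\<phi> u\<bar> \<le> real N" using real_arch_simple by blast
      show "\<forall>\<^sub>F n in sequentially. \<bar>\<phi> u - T n u\<bar> = 0"
        unfolding eventually_sequentially
      proof (intro exI allI impI)
        fix n assume "N \<le> n"
        then have "\<bar>\<phi> u\<bar> \<le> real n" using N by (meson of_nat_le_iff order_trans)
        then show "\<bar>\<phi> u - T n u\<bar> = 0" by (auto simp: T_def)
      qed
    qed
  qed
  then have conv: "(\<lambda>n. integral {0..1} (\<lambda>u. \<bar>\<phi> u - T n u\<bar>)) \<longlonglongrightarrow> 0" by simp
  show ?thesis
  proof (rule LIMSEQ_I)
    fix r :: real assume r: "0 < r"
    obtain n where n: "norm (integral {0..1} (\<lambda>u. \<bar>\<phi> u - T n u\<bar>) - 0) < r/2"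
      using LIMSEQ_D[OF conv half_gt_zero[OF r]] by (meson order_refl)
    have "(\<lambda>k. integral {0..1} (\<lambda>u. T n u * sin (real k * pi * u))) \<longlonglongrightarrow> 0"
      by (rule bessel_RL[OF Tm[of n], where B = "real n"]) (rule Tb)
    then obtain K where K: "\<And>k. k \<ge> K \<Longrightarrow> norm (integral {0..1} (\<lambda>u. T n u * sin (real k * pi * u)) - 0) < r/2"
      using LIMSEQ_D[OF _ half_gt_zero[OF r]] by blast
    show "\<exists>no. \<forall>k\<ge>no. norm (integral {0..1} (\<lambda>u. \<phi> u * sin (real k * pi * u)) - 0) < r"
    proof (intro exI allI impI)
      fix k assume k: "K \<le> k"
      have i1: "(\<lambda>u. T n u * sin (real k * pi * u)) integrable_on {0..1}"
        using abs_int_mult_sin[OF Ti[of n], of "real k * pi"] by (simp add: abs_int_imp_int mult.assoc)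
      have i2: "(\<lambda>u. (\<phi> u - T n u) * sin (real k * pi * u)) integrable_on {0..1}"
        using abs_int_mult_sin[OF Dabs[of n], of "real k * pi"] by (simp add: abs_int_imp_int mult.assoc)
      have split: "integral {0..1} (\<lambda>u. \<phi> u * sin (real k * pi * u)) =
          integral {0..1} (\<lambda>u. T n u * sin (real k * pi * u)) + integral {0..1} (\<lambda>u. (\<phi> u - T n u) * sin (real k * pi * u))"
        by (subst integral_add[OF i1 i2, symmetric]) (simp add: algebra_simps)
      have b2: "norm (integral {0..1} (\<lambda>u. (\<phi> u - T n u) * sin (real k * pi * u))) \<le> integral {0..1} (\<lambda>u. \<bar>\<phi> u - T n u\<bar>)"
      proof (rule integral_norm_bound_integral[OF i2 Di])
        fix u
        have "\<bar>(\<phi> u - T n u) * sin (real k * pi * u)\<bar> \<le> \<bar>\<phi> u - T n u\<bar> * 1"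
          unfolding abs_mult by (intro mult_left_mono) auto
        then show "norm ((\<phi> u - T n u) * sin (real k * pi * u)) \<le> \<bar>\<phi> u - T n u\<bar>" by simp
      qed
      have "norm (integral {0..1} (\<lambda>u. T n u * sin (real k * pi * u))) < r/2" using K[OF k] by simp
      moreover have "integral {0..1} (\<lambda>u. \<bar>\<phi> u - T n u\<bar>) < r/2" using n by simp
      ultimately show "norm (integral {0..1} (\<lambda>u. \<phi> u * sin (real k * pi * u)) - 0) < r"
        using b2 norm_triangle_ineq[of "integral {0..1} (\<lambda>u. T n u * sin (real k * pi * u))"
            "integral {0..1} (\<lambda>u. (\<phi> u - T n u) * sin (real k * pi * u))"]
        unfolding split by simp
    qed
  qed
qed

lemma RL:
  fixes \<phi> :: "real \<Rightarrow> real"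
  assumes \<phi>: "\<phi> absolutely_integrable_on {a..b}" and ab: "0 \<le> a" "b \<le> 1"
  shows "(\<lambda>N. integral {a..b} (\<lambda>u. \<phi> u * sin ((2 * real N + 1) * pi * u))) \<longlonglongrightarrow> 0"
proof -
  define \<psi> where "\<psi> u = (if u \<in> {a..b} then \<phi> u else 0)" for u
  have "\<psi> absolutely_integrable_on UNIV"
    using absolutely_integrable_restrict_UNIV[of "{a..b}" \<phi>] \<phi> unfolding \<psi>_def by simp
  then have \<psi>01: "\<psi> absolutely_integrable_on {0..1}"
    by (rule absolutely_integrable_on_subinterval) auto
  have eq: "integral {0..1} (\<lambda>u. \<psi> u * sin (real k * pi * u)) = integral {a..b} (\<lambda>u. \<phi> u * sin (real k * pi * u))" for k
  proof -
    have "integral {0..1} (\<lambda>u. \<psi> u * sin (real k * pi * u)) =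
        integral {0..1} (\<lambda>u. if u \<in> {a..b} then \<phi> u * sin (real k * pi * u) else 0)"
      by (rule integral_cong) (simp add: \<psi>_def)
    also have "\<dots> = integral ({a..b} \<inter> {0..1}) (\<lambda>u. \<phi> u * sin (real k * pi * u))"
      by (rule Henstock_Kurzweil_Integration.integral_restrict_Int)
    also have "{a..b} \<inter> {0..1} = {a..b}" using ab by auto
    finally show ?thesis .
  qed
  have "(\<lambda>k. integral {0..1} (\<lambda>u. \<psi> u * sin (real k * pi * u))) \<longlonglongrightarrow> 0" by (rule RL0[OF \<psi>01])
  then have L: "(\<lambda>k. integral {a..b} (\<lambda>u. \<phi> u * sin (real k * pi * u))) \<longlonglongrightarrow> 0" using eq by simp
  have sm: "strict_mono (\<lambda>N::nat. 2 * N + 1)" by (simp add: strict_mono_def)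
  show ?thesis using LIMSEQ_subseq_LIMSEQ[OF L sm] by (simp add: o_def add.commute)
qed



lemma abs_int_shift:
  fixes f :: "real \<Rightarrow> real"
  assumes "f absolutely_integrable_on {a..b}"
  shows "(\<lambda>u. f (u + c)) absolutely_integrable_on {a-c..b-c}"
  using assms unfolding absolutely_integrable_on_def
  using integrable_shift_real_ivl[of f a b c] integrable_shift_real_ivl[of "\<lambda>x. norm (f x)" a b c] by auto

lemma int_refl_shift:
  fixes f :: "real \<Rightarrow> 'b::real_normed_vector"
  assumes "f integrable_on {a..b}"
  shows "(\<lambda>u. f (c - u)) integrable_on {c-b..c-a}"
proof -
  have "(\<lambda>x. f (-x)) integrable_on {-b..-a}" using assms by simp
  from integrable_shift_real_ivl[OF this, of "-c"] show ?thesis by simp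
qed

lemma abs_int_refl_shift:
  fixes f :: "real \<Rightarrow> real"
  assumes "f absolutely_integrable_on {a..b}"
  shows "(\<lambda>u. f (c - u)) absolutely_integrable_on {c-b..c-a}"
  using assms unfolding absolutely_integrable_on_def
  using int_refl_shift[of f a b c] int_refl_shift[of "\<lambda>x. norm (f x)" a b c] by auto

lemma integral_refl_shift:
  fixes f :: "real \<Rightarrow> 'b::banach"
  shows "integral {c-b..c-a} (\<lambda>u. f (c - u)) = integral {a..b} f"
proof -
  have "integral {-b - (-c)..-a - (-c)} (\<lambda>u. (\<lambda>x. f (-x)) (u + - c)) = integral {-b..-a} (\<lambda>x. f (-x))"
    by (rule integral_shift_real_ivl)
  also have "\<dots> = integral {a..b} f" by (rule Henstock_Kurzweil_Integration.integral_reflect_real)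
  finally show ?thesis by simp
qed

lemma integral_shift':
  fixes f :: "real \<Rightarrow> 'b::banach"
  shows "integral {a-c..b-c} (\<lambda>u. f (u + c)) = integral {a..b} f"
  by (rule integral_shift_real_ivl)

lemma sin_pi_nz: "0 < u \<Longrightarrow> u < 1 \<Longrightarrow> sin (pi * u) \<noteq> 0"
  using sin_gt_zero[of "pi * u"] by auto

lemma inv_sin_cont:
  assumes "0 < a" "b < 1"
  shows "(\<lambda>u. inverse (sin (pi * u))) absolutely_integrable_on {a..b} \<and>
         continuous_on {a..b} (\<lambda>u. inverse (sin (pi * u))) \<and> bounded ((\<lambda>u. inverse (sin (pi * u))) ` {a..b})"
proof -
  have nz: "sin (pi * u) \<noteq> 0" if "u \<in> {a..b}" for u
    using that assms by (intro sin_pi_nz) auto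
  have c: "continuous_on {a..b} (\<lambda>u. inverse (sin (pi * u)))"
    using nz by (intro continuous_intros) auto
  then show ?thesis
    using compact_imp_bounded[OF compact_continuous_image[OF c compact_Icc]]
          absolutely_integrable_continuous_real[OF c] by auto
qed

lemma dini:
  fixes f :: "real \<Rightarrow> real"
  assumes fi: "f absolutely_integrable_on {0..1}" and x: "0 < x" "x < 1"
    and d0: "\<delta>0 > 0"
    and dc: "(\<lambda>u. \<bar>per f (x+u) + per f (x-u) - 2 * per f x\<bar> / u) absolutely_integrable_on {0..\<delta>0}"
  shows "(\<lambda>N. integral {0..1} (\<lambda>t. f t * DN N (x - t))) \<longlonglongrightarrow> f x"
proof -
  define \<delta> where "\<delta> = min \<delta>0 (min (x/2) (min ((1-x)/2) (1/3)))"
  have \<delta>a: "0 < \<delta>" "\<delta> \<le> \<delta>0" "\<delta> \<le> x/2" "\<delta> \<le> (1 - x)/2" "\<delta> \<le> 1/3"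
    using assms unfolding \<delta>_def by (auto simp: min_def)
  have \<delta>: "0 < \<delta>" "\<delta> \<le> \<delta>0" "\<delta> < x" "\<delta> < 1 - x" "\<delta> \<le> 1/3" using \<delta>a x by auto
  define c where "c = f x"
  define S where "S N u = sin ((2 * real N + 1) * pi * u)" for N u
  define G where "G u = f (u + x) + f (x - u) - 2 * c" for u
  define \<Phi>1 where "\<Phi>1 u = inverse (sin (pi * u)) * G u" for u
  define \<Phi>2 where "\<Phi>2 u = (f (u + x) - c) * inverse (sin (pi * u))" for u
  define \<Phi>3 where "\<Phi>3 u = (f (x - u) - c) * inverse (sin (pi * u))" for u
  have fp: "(\<lambda>u. f (u + x)) absolutely_integrable_on {0-x..1-x}"
    by (rule abs_int_shift[OF fi])
  have fm: "(\<lambda>u. f (x - u)) absolutely_integrable_on {x-1..x-0}"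
    by (rule abs_int_refl_shift[OF fi])
  have cst: "(\<lambda>u. k) absolutely_integrable_on {a..b}" for a b k :: real by simp
  have \<Phi>2i: "\<Phi>2 absolutely_integrable_on {\<delta>..1-x}"
  proof -
    have "(\<lambda>u. f (u + x)) absolutely_integrable_on {\<delta>..1-x}"
      by (rule absolutely_integrable_on_subinterval[OF fp]) (use \<delta> in auto)
    from set_integral_diff(1)[OF this cst]
    have h: "(\<lambda>u. f (u + x) - c) absolutely_integrable_on {\<delta>..1-x}" .
    have w: "continuous_on {\<delta>..1-x} (\<lambda>u. inverse (sin (pi * u))) \<and> bounded ((\<lambda>u. inverse (sin (pi * u))) ` {\<delta>..1-x})"
      using inv_sin_cont[of \<delta> "1-x"] \<delta> x by auto
    show ?thesis unfolding \<Phi>2_def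
      by (rule abs_int_mult_cont[OF h]) (use w in auto)
  qed
  have \<Phi>3i: "\<Phi>3 absolutely_integrable_on {\<delta>..x}"
  proof -
    have "(\<lambda>u. f (x - u)) absolutely_integrable_on {\<delta>..x}"
      by (rule absolutely_integrable_on_subinterval[OF fm]) (use \<delta> in auto)
    from set_integral_diff(1)[OF this cst]
    have h: "(\<lambda>u. f (x - u) - c) absolutely_integrable_on {\<delta>..x}" .
    have w: "continuous_on {\<delta>..x} (\<lambda>u. inverse (sin (pi * u))) \<and> bounded ((\<lambda>u. inverse (sin (pi * u))) ` {\<delta>..x})"
      using inv_sin_cont[of \<delta> x] \<delta> x by auto
    show ?thesis unfolding \<Phi>3_def
      by (rule abs_int_mult_cont[OF h]) (use w in auto)
  qed
  have Gi: "G absolutely_integrable_on {0..\<delta>}"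
  proof -
    have "(\<lambda>u. f (u + x)) absolutely_integrable_on {0..\<delta>}"
      by (rule absolutely_integrable_on_subinterval[OF fp]) (use \<delta> in auto)
    moreover have "(\<lambda>u. f (x - u)) absolutely_integrable_on {0..\<delta>}"
      by (rule absolutely_integrable_on_subinterval[OF fm]) (use \<delta> in auto)
    ultimately have "(\<lambda>u. f (u + x) + f (x - u)) absolutely_integrable_on {0..\<delta>}"
      by (rule set_integral_add(1))
    from set_integral_diff(1)[OF this cst[of 0 \<delta> "2 * c"]]
    show ?thesis unfolding G_def .
  qed
  have \<Phi>1i: "\<Phi>1 absolutely_integrable_on {0..\<delta>}"
  proof (rule measurable_bounded_by_integrable_imp_absolutely_integrable)
    have Gm: "G \<in> borel_measurable (lebesgue_on {0..\<delta>})"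
      using Gi by (simp add: absolutely_integrable_measurable_real)
    have sm: "(\<lambda>u. sin (pi * u)) \<in> borel_measurable (lebesgue_on {0..\<delta>})"
      by (intro continuous_imp_measurable_on_sets_lebesgue continuous_intros) auto
    show "\<Phi>1 \<in> borel_measurable (lebesgue_on {0..\<delta>})"
      unfolding \<Phi>1_def by (intro borel_measurable_times borel_measurable_inverse sm Gm)
    show "{0..\<delta>} \<in> sets lebesgue" by simp
    show "(\<lambda>u. \<bar>per f (x+u) + per f (x-u) - 2 * per f x\<bar> / u) integrable_on {0..\<delta>}"
      using absolutely_integrable_on_subinterval[OF dc, of 0 \<delta>] \<delta> by (simp add: abs_int_imp_int)
    fix u assume u: "u \<in> {0..\<delta>}"
    have pf: "per f y = f y" if "0 \<le> y" "y < 1" for y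
      unfolding per_def using that by (simp add: frac_eq)
    have eqG: "per f (x+u) + per f (x-u) - 2 * per f x = G u"
      using u \<delta> x by (simp add: pf G_def c_def add.commute)
    show "norm (\<Phi>1 u) \<le> \<bar>per f (x+u) + per f (x-u) - 2 * per f x\<bar> / u"
    proof (cases "u = 0")
      case True then show ?thesis by (simp add: \<Phi>1_def)
    next
      case False
      then have u0: "0 < u" using u by auto
      have us: "u \<le> sin (pi * u)" using u \<delta> by (intro sin_pi_ge) auto
      have "norm (\<Phi>1 u) = \<bar>G u\<bar> / sin (pi * u)"
        using us u0 by (simp add: \<Phi>1_def abs_mult divide_inverse_commute)
      also have "\<dots> \<le> \<bar>G u\<bar> / u"
        using us u0 by (intro divide_left_mono) auto
      finally show ?thesis by (simp add: eqG)
    qed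
  qed
  define h where "h N t = (f t - c) * DN N (t - x)" for N t
  have DNc: "continuous_on A (\<lambda>t. DN N (t - x))" for A N
    unfolding DN_def by (intro continuous_intros)
  have DNb: "bounded ((\<lambda>t. DN N (t - x)) ` {a..b})" for a b N
    using compact_imp_bounded[OF compact_continuous_image[OF DNc compact_Icc]] .
  have fDN: "(\<lambda>t. f t * DN N (t - x)) absolutely_integrable_on {0..1}" for N
    by (rule abs_int_mult_cont[OF fi _ DNc DNb]) simp
  have hi: "h N integrable_on {0..1}" for N
  proof -
    have "(\<lambda>t. f t - c) absolutely_integrable_on {0..1}"
      using set_integral_diff(1)[OF fi cst] .
    then have "(\<lambda>t. (f t - c) * DN N (t - x)) absolutely_integrable_on {0..1}"
      by (rule abs_int_mult_cont[OF _ _ DNc DNb]) simp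
    then show ?thesis unfolding h_def by (rule abs_int_imp_int)
  qed
  have E1: "integral {0..1} (\<lambda>t. f t * DN N (x - t)) = c + integral {0..1} (h N)" for N
  proof -
    have i1: "(\<lambda>t. f t * DN N (t - x)) integrable_on {0..1}" using fDN by (rule abs_int_imp_int)
    have i2: "(\<lambda>t. c * DN N (t - x)) integrable_on {0..1}"
      by (intro integrable_on_mult_right integrable_continuous_interval DNc)
    have "integral {0..1} (h N) = integral {0..1} (\<lambda>t. f t * DN N (t - x) - c * DN N (t - x))"
      unfolding h_def by (rule integral_cong) (simp add: algebra_simps)
    also have "\<dots> = integral {0..1} (\<lambda>t. f t * DN N (t - x)) - c * integral {0..1} (\<lambda>t. DN N (t - x))"
      using integral_diff[OF i1 i2] by simp
    also have "\<dots> = integral {0..1} (\<lambda>t. f t * DN N (x - t)) - c"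
    proof -
      have e: "(\<lambda>t. f t * DN N (t - x)) = (\<lambda>t. f t * DN N (x - t))"
        by (rule ext) (metis DN_even minus_diff_eq)
      show ?thesis by (simp only: e DN_integral mult_1_right)
    qed
    finally show ?thesis by simp
  qed
  have E2: "integral {0..1} (h N) = integral {0..x-\<delta>} (h N) + integral {x-\<delta>..x} (h N)
      + integral {x..x+\<delta>} (h N) + integral {x+\<delta>..1} (h N)" for N
  proof -
    have a: "integral {0..x-\<delta>} (h N) + integral {x-\<delta>..1} (h N) = integral {0..1} (h N)"
      by (rule Henstock_Kurzweil_Integration.integral_combine[OF _ _ hi]) (use \<delta> in auto)
    have hi1: "h N integrable_on {x-\<delta>..1}" by (rule integrable_on_subinterval[OF hi]) (use \<delta> in auto)
    have b: "integral {x-\<delta>..x} (h N) + integral {x..1} (h N) = integral {x-\<delta>..1} (h N)"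
      by (rule Henstock_Kurzweil_Integration.integral_combine[OF _ _ hi1]) (use \<delta> in auto)
    have hi2: "h N integrable_on {x..1}" by (rule integrable_on_subinterval[OF hi]) (use \<delta> x in auto)
    have c: "integral {x..x+\<delta>} (h N) + integral {x+\<delta>..1} (h N) = integral {x..1} (h N)"
      by (rule Henstock_Kurzweil_Integration.integral_combine[OF _ _ hi2]) (use \<delta> in auto)
    show ?thesis using a b c by simp
  qed
  have hp: "h N (u + x) = (f (u + x) - c) * DN N u" for N u by (simp add: h_def)
  have hm: "h N (x - u) = (f (x - u) - c) * DN N u" for N u
    using DN_even[of N u] by (simp add: h_def)
  have E3: "integral {0..1} (\<lambda>t. f t * DN N (x - t)) =
      c + (integral {0..\<delta>} (\<lambda>u. \<Phi>1 u * S N u) + integral {\<delta>..1-x} (\<lambda>u. \<Phi>2 u * S N u)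
           + integral {\<delta>..x} (\<lambda>u. \<Phi>3 u * S N u))" for N
  proof -
    have s1: "integral {x..x+\<delta>} (h N) = integral {0..\<delta>} (\<lambda>u. h N (u + x))"
      using integral_shift'[of x x "x+\<delta>" "h N"] by simp
    have s2: "integral {x+\<delta>..1} (h N) = integral {\<delta>..1-x} (\<lambda>u. h N (u + x))"
      using integral_shift'[of "x+\<delta>" x 1 "h N"] by simp
    have s3: "integral {x-\<delta>..x} (h N) = integral {0..\<delta>} (\<lambda>u. h N (x - u))"
      using integral_refl_shift[of x x "x-\<delta>" "h N"] by simp
    have s4: "integral {0..x-\<delta>} (h N) = integral {\<delta>..x} (\<lambda>u. h N (x - u))"
      using integral_refl_shift[of x "x-\<delta>" 0 "h N"] by simp
    have ip: "(\<lambda>u. h N (u + x)) integrable_on {0..\<delta>}"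
    proof -
      have "(\<lambda>u. h N (u + x)) integrable_on {0-x..1-x}" using integrable_shift_real_ivl[OF hi] .
      then show ?thesis by (rule integrable_on_subinterval) (use \<delta> in auto)
    qed
    have im: "(\<lambda>u. h N (x - u)) integrable_on {0..\<delta>}"
    proof -
      have "(\<lambda>u. h N (x - u)) integrable_on {x-1..x-0}" using int_refl_shift[OF hi] .
      then show ?thesis by (rule integrable_on_subinterval) (use \<delta> in auto)
    qed
    have t1: "integral {0..\<delta>} (\<lambda>u. h N (u + x)) + integral {0..\<delta>} (\<lambda>u. h N (x - u)) =
        integral {0..\<delta>} (\<lambda>u. \<Phi>1 u * S N u)"
    proof -
      have "integral {0..\<delta>} (\<lambda>u. h N (u + x)) + integral {0..\<delta>} (\<lambda>u. h N (x - u)) =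
          integral {0..\<delta>} (\<lambda>u. h N (u + x) + h N (x - u))"
        by (rule integral_add[OF ip im, symmetric])
      also have "\<dots> = integral {0..\<delta>} (\<lambda>u. \<Phi>1 u * S N u)"
      proof (rule integral_spike[of "{0}"])
        show "negligible {0::real}" by simp
        fix u assume u: "u \<in> {0..\<delta>} - {0}"
        then have "sin (pi * u) \<noteq> 0" using \<delta> x by (intro sin_pi_nz) auto
        then have D: "DN N u = S N u / sin (pi * u)" unfolding S_def by (rule DN_closed)
        have "h N (u + x) + h N (x - u) = G u * DN N u"
          unfolding hp hm G_def by (simp add: algebra_simps)
        also have "\<dots> = \<Phi>1 u * S N u"
          unfolding D \<Phi>1_def by (simp add: divide_inverse ac_simps)
        finally show "\<Phi>1 u * S N u = h N (u + x) + h N (x - u)" by simp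
      qed
      finally show ?thesis .
    qed
    have t2: "integral {\<delta>..1-x} (\<lambda>u. h N (u + x)) = integral {\<delta>..1-x} (\<lambda>u. \<Phi>2 u * S N u)"
    proof (rule integral_cong)
      fix u assume u: "u \<in> {\<delta>..1-x}"
      then have "sin (pi * u) \<noteq> 0" using \<delta> x by (intro sin_pi_nz) auto
      then show "h N (u + x) = \<Phi>2 u * S N u"
        unfolding hp \<Phi>2_def using DN_closed[of u N] by (simp add: S_def divide_inverse ac_simps)
    qed
    have t3: "integral {\<delta>..x} (\<lambda>u. h N (x - u)) = integral {\<delta>..x} (\<lambda>u. \<Phi>3 u * S N u)"
    proof (rule integral_cong)
      fix u assume u: "u \<in> {\<delta>..x}"
      then have "sin (pi * u) \<noteq> 0" using \<delta> x by (intro sin_pi_nz) auto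
      then show "h N (x - u) = \<Phi>3 u * S N u"
        unfolding hm \<Phi>3_def using DN_closed[of u N] by (simp add: S_def divide_inverse ac_simps)
    qed
    show ?thesis
      unfolding E1 E2 s1 s2 s3 s4 using t1 t2 t3 by simp
  qed
  have L1: "(\<lambda>N. integral {0..\<delta>} (\<lambda>u. \<Phi>1 u * S N u)) \<longlonglongrightarrow> 0"
    unfolding S_def by (rule RL[OF \<Phi>1i]) (use \<delta> in auto)
  have L2: "(\<lambda>N. integral {\<delta>..1-x} (\<lambda>u. \<Phi>2 u * S N u)) \<longlonglongrightarrow> 0"
    unfolding S_def by (rule RL[OF \<Phi>2i]) (use \<delta> x in auto)
  have L3: "(\<lambda>N. integral {\<delta>..x} (\<lambda>u. \<Phi>3 u * S N u)) \<longlonglongrightarrow> 0"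
    unfolding S_def by (rule RL[OF \<Phi>3i]) (use \<delta> x in auto)
  have "(\<lambda>N. c + (integral {0..\<delta>} (\<lambda>u. \<Phi>1 u * S N u) + integral {\<delta>..1-x} (\<lambda>u. \<Phi>2 u * S N u)
           + integral {\<delta>..x} (\<lambda>u. \<Phi>3 u * S N u))) \<longlonglongrightarrow> c + (0 + 0 + 0)"
    by (intro tendsto_intros L1 L2 L3)
  then show ?thesis unfolding E3 c_def by simp
qed



lemma bilinear_scaleR_flip: "bilinear (\<lambda>(z::complex) (r::real). r *\<^sub>R z)"
  by (auto simp: bilinear_def scaleR_add_left scaleR_add_right intro!: linearI)

lemma int_fc:
  fixes f :: "real \<Rightarrow> real" and F :: "real \<Rightarrow> complex"
  assumes fi: "f absolutely_integrable_on {0..1}" and Fc: "continuous_on {0..1} F"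
    and Fb: "\<And>t. norm (F t) \<le> 1"
  shows "(\<lambda>t. complex_of_real (f t) * F t) integrable_on {0..1}"
proof -
  have "(\<lambda>t. (\<lambda>(z::complex) (r::real). r *\<^sub>R z) (F t) (f t)) absolutely_integrable_on {0..1}"
  proof (rule absolutely_integrable_bounded_measurable_product[OF bilinear_scaleR_flip _ _ _ fi])
    show "F \<in> borel_measurable (lebesgue_on {0..1})"
      by (rule continuous_imp_measurable_on_sets_lebesgue[OF Fc]) simp
    show "bounded (F ` {0..1})" unfolding bounded_iff using Fb by auto
  qed simp
  then have "(\<lambda>t. f t *\<^sub>R F t) integrable_on {0..1}" by (simp add: abs_int_imp_int)
  then show ?thesis by (simp add: scaleR_conv_of_real)
qed

lemma exp_pair:
  "exp (2 * of_real pi * \<i> * of_int (int m) * of_real y) + exp (2 * of_real pi * \<i> * of_int (- int m) * of_real y)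
    = complex_of_real (2 * cos (2 * pi * real m * y))"
proof -
  define z where "z = complex_of_real (2 * pi * real m * y)"
  have "cos z = (exp (\<i> * z) + exp (- (\<i> * z))) / 2" by (rule cos_exp_eq)
  moreover have "cos z = complex_of_real (cos (2 * pi * real m * y))"
    unfolding z_def by (rule cos_of_real)
  moreover have "\<i> * z = 2 * of_real pi * \<i> * of_int (int m) * of_real y"
    unfolding z_def by simp
  moreover have "- (\<i> * z) = 2 * of_real pi * \<i> * of_int (- int m) * of_real y"
    unfolding z_def by simp
  ultimately show ?thesis by (simp add: field_simps)
qed

lemma exp_sum_DN:
  "(\<Sum>l\<in>{-int N..int N}. exp (2 * of_real pi * \<i> * of_int l * of_real y)) = complex_of_real (DN N y)"
proof (induction N)
  case 0
  then show ?case by (simp add: DN_def)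
next
  case (Suc N)
  have set: "{-int (Suc N)..int (Suc N)} = insert (int (Suc N)) (insert (- int (Suc N)) {-int N..int N})"
    by auto
  have DN: "DN (Suc N) y = DN N y + 2 * cos (2 * pi * real (Suc N) * y)"
    by (simp add: DN_def)
  show ?case
    unfolding set using Suc exp_pair[of "Suc N" y]
    by (simp add: DN algebra_simps)
qed

lemma partial_sum:
  fixes f :: "real \<Rightarrow> real"
  assumes fi: "f absolutely_integrable_on {0..1}"
  shows "(\<Sum>l\<in>{-int N..int N}. fourier_coeff f l * exp (2 * of_real pi * \<i> * of_int l * of_real x)) =
    complex_of_real (integral {0..1} (\<lambda>t. f t * DN N (x - t)))"
proof -
  define E where "E l t = exp (2 * of_real pi * \<i> * of_int l * of_real t)" for l t
  have Ec: "continuous_on A (\<lambda>t. E l (a - t))" for A l a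
    unfolding E_def by (intro continuous_intros)
  have Eb: "norm (E l (a - t)) \<le> 1" for l a t
    unfolding E_def by simp
  have I: "(\<lambda>t. complex_of_real (f t) * E l (x - t)) integrable_on {0..1}" for l
    by (rule int_fc[OF fi Ec Eb])
  have step: "fourier_coeff f l * E l x = integral {0..1} (\<lambda>t. complex_of_real (f t) * E l (x - t))" for l
  proof -
    have "fourier_coeff f l * E l x =
        integral {0..1} (\<lambda>t. complex_of_real (f t) * exp (- (2 * of_real pi * \<i> * of_int l * of_real t)) * E l x)"
      unfolding fourier_coeff_def by simp
    also have "\<dots> = integral {0..1} (\<lambda>t. complex_of_real (f t) * E l (x - t))"
    proof (rule integral_cong)
      fix t
      have "exp (- (2 * of_real pi * \<i> * of_int l * of_real t)) * E l x = E l (x - t)"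
        unfolding E_def by (simp add: exp_add[symmetric] algebra_simps)
      then show "complex_of_real (f t) * exp (- (2 * of_real pi * \<i> * of_int l * of_real t)) * E l x =
          complex_of_real (f t) * E l (x - t)" by (simp add: mult.assoc)
    qed
    finally show ?thesis .
  qed
  have "(\<Sum>l\<in>{-int N..int N}. fourier_coeff f l * E l x) =
      (\<Sum>l\<in>{-int N..int N}. integral {0..1} (\<lambda>t. complex_of_real (f t) * E l (x - t)))"
    by (simp add: step)
  also have "\<dots> = integral {0..1} (\<lambda>t. \<Sum>l\<in>{-int N..int N}. complex_of_real (f t) * E l (x - t))"
    by (rule integral_sum[symmetric]) (auto intro: I)
  also have "\<dots> = integral {0..1} (\<lambda>t. complex_of_real (f t * DN N (x - t)))"
  proof (rule integral_cong)
    fix t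
    have "(\<Sum>l\<in>{-int N..int N}. complex_of_real (f t) * E l (x - t)) = complex_of_real (f t) * (\<Sum>l\<in>{-int N..int N}. E l (x - t))"
      by (simp add: sum_distrib_left)
    also have "\<dots> = complex_of_real (f t * DN N (x - t))"
      unfolding E_def exp_sum_DN by simp
    finally show "(\<Sum>l\<in>{-int N..int N}. complex_of_real (f t) * E l (x - t)) = complex_of_real (f t * DN N (x - t))" .
  qed
  also have "\<dots> = complex_of_real (integral {0..1} (\<lambda>t. f t * DN N (x - t)))"
  proof -
    have fDN: "(\<lambda>t. f t * DN N (x - t)) absolutely_integrable_on {0..1}"
      by (rule abs_int_mult_cont[OF fi]) (auto intro!: continuous_intros compact_imp_bounded compact_continuous_image simp: DN_def)
    show ?thesis
      by (rule integral_unique[OF has_integral_of_real[OF integrable_integral[OF abs_int_imp_int[OF fDN]]]])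
  qed
  finally show ?thesis unfolding E_def .
qed

lemma eps_sum:
  assumes d: "d \<ge> 1"
  shows "complex_of_real (eps l d) = (\<Sum>k=1..d-1. exp (2 * of_real pi * \<i> * of_int l * of_real (real k / real d)))"
proof -
  define \<omega> where "\<omega> = exp (2 * of_real pi * \<i> * of_int l / of_nat d)"
  have pw: "exp (2 * of_real pi * \<i> * of_int l * of_real (real k / real d)) = \<omega> ^ k" for k
  proof -
    have "\<omega> ^ k = exp (of_nat k * (2 * of_real pi * \<i> * of_int l / of_nat d))"
      unfolding \<omega>_def by (rule exp_of_nat_mult[symmetric])
    also have "of_nat k * (2 * of_real pi * \<i> * of_int l / of_nat d) = 2 * of_real pi * \<i> * of_int l * of_real (real k / real d)"
      by simp
    finally show ?thesis by simp
  qed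
  have geo: "(\<Sum>k<d. \<omega> ^ k) = (if int d dvd l then of_nat d else 0)"
  proof (cases "int d dvd l")
    case True
    then obtain m where m: "l = int d * m" by (elim dvdE)
    have "\<omega> = exp ((2 * of_int m * pi) * \<i>)"
      unfolding \<omega>_def m using d by (simp add: field_simps)
    also have "\<dots> = 1" by (rule exp_integer_2pi) simp
    finally show ?thesis using True by simp
  next
    case False
    have w1: "\<omega> \<noteq> 1"
    proof
      assume "\<omega> = 1"
      then obtain n :: int where n: "Im (2 * of_real pi * \<i> * of_int l / of_nat d) = of_int (2 * n) * pi"
        unfolding \<omega>_def exp_eq_1 by blast
      have "Im (2 * of_real pi * \<i> * of_int l / of_nat d) = 2 * pi * of_int l / real d"
        by (simp add: Im_divide_of_nat)
      with n have "2 * pi * of_int l / real d = of_int (2 * n) * pi" by simp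
      then have "real_of_int l = real d * of_int n" using d by (simp add: field_simps)
      then have "l = int d * n" by (metis of_int_eq_iff of_int_mult of_int_of_nat_eq)
      then show False using False by simp
    qed
    have wd: "\<omega> ^ d = 1"
    proof -
      have "\<omega> ^ d = exp (of_nat d * (2 * of_real pi * \<i> * of_int l / of_nat d))"
        unfolding \<omega>_def by (rule exp_of_nat_mult[symmetric])
      also have "\<dots> = exp ((2 * of_int l * pi) * \<i>)" using d by (simp add: field_simps)
      also have "\<dots> = 1" by (rule exp_integer_2pi) simp
      finally show ?thesis .
    qed
    show ?thesis using False w1 wd by (simp add: geometric_sum)
  qed
  have set: "{..<d} = insert 0 {1..d-1}" using d by auto
  have "(\<Sum>k<d. \<omega> ^ k) = 1 + (\<Sum>k=1..d-1. \<omega> ^ k)"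
    unfolding set by (subst sum.insert) auto
  then have "(\<Sum>k=1..d-1. \<omega> ^ k) = (if int d dvd l then of_nat d else 0) - 1"
    using geo by simp
  then show ?thesis
    unfolding pw eps_def using d by (auto simp: of_nat_diff)
qed



theorem proposition3p1:
  fixes f :: "real \<Rightarrow> real" and d :: nat
  assumes integrable: "f absolutely_integrable_on {0..1}"
    and C: "classC f"
    and d: "d \<ge> 1"
  shows "(((\<lambda>N. \<Sum>l\<in>{- int N..int N}. fourier_coeff f l * complex_of_real (eps l d))
            \<longlongrightarrow> complex_of_real (Dsum f d - f 1)) sequentially) \<and>
         (\<forall>S. ((\<lambda>N. \<Sum>l\<in>{- int N..int N}. fourier_coeff f l) \<longlongrightarrow> S) sequentially \<longrightarrow>
           (\<exists>T. ((\<lambda>N. \<Sum>l\<in>{l\<in>{- int N..int N}. int d dvd l}. fourier_coeff f l) \<longlongrightarrow> T) sequentially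
               \<and> complex_of_real (Dsum f d) = complex_of_real (f 1) + of_nat d * T - S))"
proof -
  define A where "A N = (\<Sum>l\<in>{- int N..int N}. fourier_coeff f l * complex_of_real (eps l d))" for N
  have A_eq: "A N = (\<Sum>k=1..d-1. complex_of_real (integral {0..1} (\<lambda>t. f t * DN N (real k / real d - t))))" for N
  proof -
    have "A N = (\<Sum>l\<in>{-int N..int N}. \<Sum>k=1..d-1. fourier_coeff f l * exp (2 * of_real pi * \<i> * of_int l * of_real (real k / real d)))"
      unfolding A_def by (simp add: eps_sum[OF d] sum_distrib_left)
    also have "\<dots> = (\<Sum>k=1..d-1. \<Sum>l\<in>{-int N..int N}. fourier_coeff f l * exp (2 * of_real pi * \<i> * of_int l * of_real (real k / real d)))"
      by (rule sum.swap)
    also have "\<dots> = (\<Sum>k=1..d-1. complex_of_real (integral {0..1} (\<lambda>t. f t * DN N (real k / real d - t))))"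
      by (simp only: partial_sum[OF integrable])
    finally show ?thesis .
  qed
  have lim_k: "(\<lambda>N. integral {0..1} (\<lambda>t. f t * DN N (real k / real d - t))) \<longlonglongrightarrow> f (real k / real d)"
    if k: "k \<in> {1..d-1}" for k
  proof -
    define x where "x = real k / real d"
    have x: "0 < x" "x < 1" using k d by (auto simp: x_def field_simps)
    have "x \<in> \<rat>" unfolding x_def by simp
    then obtain \<delta> where "\<delta> > 0" and
      dc: "(\<lambda>u. \<bar>per f (x + u) + per f (x - u) - 2 * per f x\<bar> / u) absolutely_integrable_on {0..\<delta>}"
      using C x unfolding classC_def by blast
    from dini[OF integrable x \<open>\<delta> > 0\<close> dc] show ?thesis unfolding x_def .
  qed
  have Dsum_eq: "(\<Sum>k=1..d-1. complex_of_real (f (real k / real d))) = complex_of_real (Dsum f d - f 1)"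
  proof -
    have set: "{1..d} = insert d {1..d-1}" using d by auto
    have "Dsum f d = f (real d / real d) + (\<Sum>k=1..d-1. f (real k / real d))"
      unfolding Dsum_def set by (subst sum.insert) auto
    then show ?thesis using d by simp
  qed
  have part1: "A \<longlonglongrightarrow> complex_of_real (Dsum f d - f 1)"
  proof -
    have "(\<lambda>N. \<Sum>k=1..d-1. complex_of_real (integral {0..1} (\<lambda>t. f t * DN N (real k / real d - t))))
        \<longlonglongrightarrow> (\<Sum>k=1..d-1. complex_of_real (f (real k / real d)))"
      by (intro tendsto_sum tendsto_of_real lim_k)
    then show ?thesis unfolding A_eq[abs_def] Dsum_eq .
  qed
  have part2: "\<exists>T. ((\<lambda>N. \<Sum>l\<in>{l\<in>{- int N..int N}. int d dvd l}. fourier_coeff f l) \<longlongrightarrow> T) sequentially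
               \<and> complex_of_real (Dsum f d) = complex_of_real (f 1) + of_nat d * T - S"
    if hS: "((\<lambda>N. \<Sum>l\<in>{- int N..int N}. fourier_coeff f l) \<longlongrightarrow> S) sequentially" for S
  proof -
    define B where "B N = (\<Sum>l\<in>{l\<in>{- int N..int N}. int d dvd l}. fourier_coeff f l)" for N
    define Sn where "Sn N = (\<Sum>l\<in>{- int N..int N}. fourier_coeff f l)" for N
    have dnz: "(of_nat d :: complex) \<noteq> 0" using d by simp
    have AB: "A N = of_nat d * B N - Sn N" for N
    proof -
      have pt: "fourier_coeff f l * complex_of_real (eps l d) =
          of_nat d * (if int d dvd l then fourier_coeff f l else 0) - fourier_coeff f l" for l
        by (simp add: eps_def algebra_simps)
      have "A N = (\<Sum>l\<in>{-int N..int N}. of_nat d * (if int d dvd l then fourier_coeff f l else 0) - fourier_coeff f l)"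
        unfolding A_def by (simp only: pt)
      also have "\<dots> = of_nat d * (\<Sum>l\<in>{-int N..int N}. if int d dvd l then fourier_coeff f l else 0) - Sn N"
        unfolding Sn_def by (simp add: sum_subtractf sum_distrib_left)
      also have "(\<Sum>l\<in>{-int N..int N}. if int d dvd l then fourier_coeff f l else 0) = B N"
        unfolding B_def by (rule sum.inter_filter[symmetric]) simp
      finally show ?thesis .
    qed
    have BA: "B N = (A N + Sn N) / of_nat d" for N
      using AB[of N] dnz by (simp add: field_simps)
    define T where "T = (complex_of_real (Dsum f d - f 1) + S) / of_nat d"
    have "B \<longlonglongrightarrow> T"
      unfolding BA[abs_def] T_def
      by (intro tendsto_divide tendsto_add part1 dnz tendsto_const) (use hS in \<open>simp add: Sn_def\<close>)
    moreover have "complex_of_real (Dsum f d) = complex_of_real (f 1) + of_nat d * T - S"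
      unfolding T_def using dnz by (simp add: field_simps)
    ultimately show ?thesis unfolding B_def by blast
  qed
  show ?thesis using part1 part2 unfolding A_def by blast
qed

end
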